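(* Let $A\bowtie^{\theta} I$ be an amalgamated Banach algebra as in the context, and assume $\sigma(A)\neq\emptyset$ and that the linear span of $\theta(A)I\cup I\theta(A)$ is dense in $I$. Identify characters of $A\bowtie^\theta I$ with pairs $(\phi,\psi)\in A^*\times I^*$ via $(a,i)\mapsto\phi(a)+\psi(i)$. Then $\sigma(A\bowtie^{\theta} I)=E\cup F$, where $$E=\{(\phi_{\psi,i},\psi): \psi\in\sigma(I),\ i\in I,\ \psi(i)=1\},\qquad \phi_{\psi,i}(a)=\psi(\theta(a)i)\ (a\in A),$$ $$F=\{(\phi,0):\phi\in\sigma(A)\}.$$ Moreover, with respect to the weak$^*$ topology, $E$ is open and $F$ is closed in $\sigma(A\bowtie^\theta I)$.
   Context: Let $A$ and $B$ be Banach algebras, $\theta:A\to B$ a continuous algebra homomorphism with $\|\theta\|\le 1$, and $I$ a closed two-sided ideal of $B$. The amalgamated Banach algebra $A\bowtie^{\theta} I$ is the Banach space $\{(a,i): a\in A,\ i\in I\}$ with norm $\|(a,i)\|=\|a\|+\|i\|$ and product $(a,i)\cdot(a',i')=(aa',\ \theta(a)i'+i\theta(a')+ii')$. For a Banach algebra $C$, $\sigma(C)$ denotes the set of nonzero multiplicative linear functionals (characters) on $C$, with the relative weak$^*$ topology. $\theta(A)I$ denotes $\{\theta(a)i: a\in A, i\in I\}$ and similarly for $I\theta(A)$. *)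

theory Defs
  imports "HOL-Analysis.Analysis"
begin

class cvector = real_vector +
  fixes scaleC :: "complex \<Rightarrow> 'a \<Rightarrow> 'a"
  assumes scaleC_add_right: "scaleC c (x + y) = scaleC c x + scaleC c y"
    and scaleC_add_left: "scaleC (c + d) x = scaleC c x + scaleC d x"
    and scaleC_scaleC: "scaleC c (scaleC d x) = scaleC (c * d) x"
    and scaleC_one: "scaleC 1 x = x"
    and scaleR_scaleC: "scaleR r x = scaleC (of_real r) x"

class cnormed_algebra = cvector + real_normed_algebra +
  assumes norm_scaleC: "norm (scaleC c x) = cmod c * norm x"
    and scaleC_mult_left: "scaleC c (x * y) = scaleC c x * y"
    and scaleC_mult_right: "scaleC c (x * y) = x * scaleC c y"

class cbanach_algebra = cnormed_algebra + banach

definition cspan :: "'a::cvector set \<Rightarrow> 'a set" where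
  "cspan S = {y. \<exists>T c. finite T \<and> T \<subseteq> S \<and> y = (\<Sum>x\<in>T. scaleC (c x) x)}"

text \<open>A character of an algebra with carrier C (and operations add, mul, smul) is a
nonzero complex-linear multiplicative functional on C. To make it a unique object
we normalize it to be 0 outside C.\<close>

definition is_character ::
  "'x set \<Rightarrow> ('x \<Rightarrow> 'x \<Rightarrow> 'x) \<Rightarrow> ('x \<Rightarrow> 'x \<Rightarrow> 'x) \<Rightarrow> (complex \<Rightarrow> 'x \<Rightarrow> 'x)
     \<Rightarrow> ('x \<Rightarrow> complex) \<Rightarrow> bool" where
  "is_character C addo mulo smulo f \<longleftrightarrow>
     (\<forall>x\<in>C. \<forall>y\<in>C. f (addo x y) = f x + f y \<and> f (mulo x y) = f x * f y) \<and>
     (\<forall>c. \<forall>x\<in>C. f (smulo c x) = c * f x) \<and>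
     (\<exists>x\<in>C. f x \<noteq> 0) \<and>
     (\<forall>x. x \<notin> C \<longrightarrow> f x = 0)"

definition characters ::
  "'x set \<Rightarrow> ('x \<Rightarrow> 'x \<Rightarrow> 'x) \<Rightarrow> ('x \<Rightarrow> 'x \<Rightarrow> 'x) \<Rightarrow> (complex \<Rightarrow> 'x \<Rightarrow> 'x)
     \<Rightarrow> ('x \<Rightarrow> complex) set" where
  "characters C addo mulo smulo = {f. is_character C addo mulo smulo f}"

text \<open>sigma(A) for a complex Banach algebra A (the whole type), and sigma(I) for a
closed ideal I (a subset of B, with the inherited operations).\<close>

definition char_space :: "'a::cbanach_algebra set \<Rightarrow> ('a \<Rightarrow> complex) set" where
  "char_space C = characters C (+) (*) scaleC"

definition amal_carrier :: "'b::cbanach_algebra set \<Rightarrow> ('a::cbanach_algebra \<times> 'b) set" where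
  "amal_carrier I = UNIV \<times> I"

definition amal_mult ::
  "('a::cbanach_algebra \<Rightarrow> 'b::cbanach_algebra) \<Rightarrow> 'a \<times> 'b \<Rightarrow> 'a \<times> 'b \<Rightarrow> 'a \<times> 'b" where
  "amal_mult \<theta> x y = (fst x * fst y,
      \<theta> (fst x) * snd y + snd x * \<theta> (fst y) + snd x * snd y)"

definition amal_add :: "'a::cbanach_algebra \<times> 'b::cbanach_algebra \<Rightarrow> 'a \<times> 'b \<Rightarrow> 'a \<times> 'b" where
  "amal_add x y = (fst x + fst y, snd x + snd y)"

definition amal_smul :: "complex \<Rightarrow> 'a::cbanach_algebra \<times> 'b::cbanach_algebra \<Rightarrow> 'a \<times> 'b" where
  "amal_smul c x = (scaleC c (fst x), scaleC c (snd x))"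

text \<open>sigma(A amalgamated-by-theta I); its weak* topology is the topology of pointwise
convergence on the carrier, i.e. the subspace topology inherited from the product
topology on functions (characters vanish off the carrier).\<close>

definition amal_char_space ::
  "('a::cbanach_algebra \<Rightarrow> 'b::cbanach_algebra) \<Rightarrow> 'b set \<Rightarrow> ('a \<times> 'b \<Rightarrow> complex) set" where
  "amal_char_space \<theta> I = characters (amal_carrier I) amal_add (amal_mult \<theta>) amal_smul"

definition pair_fun ::
  "'b set \<Rightarrow> ('a \<Rightarrow> complex) \<Rightarrow> ('b \<Rightarrow> complex) \<Rightarrow> ('a \<times> 'b \<Rightarrow> complex)" where
  "pair_fun I \<phi> \<psi> = (\<lambda>(a, j). if j \<in> I then \<phi> a + \<psi> j else 0)"

definition closed_ideal :: "'b::cbanach_algebra set \<Rightarrow> bool" where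
  "closed_ideal I \<longleftrightarrow> closed I \<and> 0 \<in> I \<and>
     (\<forall>x\<in>I. \<forall>y\<in>I. x + y \<in> I) \<and> (\<forall>c. \<forall>x\<in>I. scaleC c x \<in> I) \<and>
     (\<forall>b. \<forall>x\<in>I. b * x \<in> I \<and> x * b \<in> I)"

definition contractive_hom :: "('a::cbanach_algebra \<Rightarrow> 'b::cbanach_algebra) \<Rightarrow> bool" where
  "contractive_hom \<theta> \<longleftrightarrow>
     (\<forall>x y. \<theta> (x + y) = \<theta> x + \<theta> y) \<and> (\<forall>c x. \<theta> (scaleC c x) = scaleC c (\<theta> x)) \<and>
     (\<forall>x y. \<theta> (x * y) = \<theta> x * \<theta> y) \<and> (\<forall>x. norm (\<theta> x) \<le> norm x)"

end

theory Submission imports Defs begin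

lemma scaleC_zero_right[simp]: "scaleC c (0::'a::cvector) = 0"
proof -
  have "scaleC c (0::'a) = scaleC c 0 + scaleC c 0" by (metis add.right_neutral scaleC_add_right)
  then show ?thesis by simp
qed

lemma hom_zero: assumes "contractive_hom \<theta>" shows "\<theta> 0 = 0"
proof -
  have "\<theta> 0 = \<theta> 0 + \<theta> 0" using assms unfolding contractive_hom_def by (metis add.right_neutral)
  then show ?thesis by simp
qed

lemma char_zero: assumes "is_character C (+) (*) scaleC \<psi>" "0 \<in> C" shows "\<psi> 0 = 0"
proof -
  have "\<psi> (0+0) = \<psi> 0 + \<psi> 0" using assms unfolding is_character_def by blast
  then show ?thesis by simp
qed

lemma E_sub:
  fixes \<theta> :: "'a::cbanach_algebra \<Rightarrow> 'b::cbanach_algebra"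
  assumes hom: "contractive_hom \<theta>" and ideal: "closed_ideal I"
    and psi: "\<psi> \<in> char_space I" and iI: "i \<in> I" and one: "\<psi> i = 1"
  shows "pair_fun I (\<lambda>a. \<psi> (\<theta> a * i)) \<psi> \<in> amal_char_space \<theta> I"
proof -
  have ch: "is_character I (+) (*) scaleC \<psi>" using psi by (simp add: char_space_def characters_def)
  have padd: "\<And>x y. x \<in> I \<Longrightarrow> y \<in> I \<Longrightarrow> \<psi> (x+y) = \<psi> x + \<psi> y"
   and pmul: "\<And>x y. x \<in> I \<Longrightarrow> y \<in> I \<Longrightarrow> \<psi> (x*y) = \<psi> x * \<psi> y"
   and psm: "\<And>c x. x \<in> I \<Longrightarrow> \<psi> (scaleC c x) = c * \<psi> x"
    using ch unfolding is_character_def by blast+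
  have Iadd: "\<And>x y. x \<in> I \<Longrightarrow> y \<in> I \<Longrightarrow> x+y \<in> I"
   and Ism: "\<And>c x. x \<in> I \<Longrightarrow> scaleC c x \<in> I"
   and Il: "\<And>b x. x \<in> I \<Longrightarrow> b * x \<in> I"
   and Ir: "\<And>b x. x \<in> I \<Longrightarrow> x * b \<in> I"
   and I0: "0 \<in> I"
    using ideal unfolding closed_ideal_def by blast+
  have tadd: "\<And>x y. \<theta> (x+y) = \<theta> x + \<theta> y" and tsm: "\<And>c x. \<theta> (scaleC c x) = scaleC c (\<theta> x)"
   and tmul: "\<And>x y. \<theta> (x*y) = \<theta> x * \<theta> y"
    using hom unfolding contractive_hom_def by blast+
  define \<phi> where "\<phi> a = \<psi> (\<theta> a * i)" for a
  define c where "c a = \<psi> (i * \<theta> a)" for a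
  have L: "\<psi> (\<theta> a * k) = c a * \<psi> k" if k: "k \<in> I" for a k
  proof -
    have "\<psi> (i * \<theta> a * k) = c a * \<psi> k" unfolding c_def using pmul Ir iI k by simp
    moreover have "\<psi> (i * \<theta> a * k) = \<psi> (\<theta> a * k)"
      using pmul[OF iI Il[OF k]] one by (simp add: mult.assoc)
    ultimately show ?thesis by simp
  qed
  have phic: "\<phi> a = c a" for a using L[OF iI] one by (simp add: \<phi>_def)
  have R: "\<psi> (k * \<theta> a) = \<psi> k * \<phi> a" if k: "k \<in> I" for a k
  proof -
    have "\<psi> (k * \<theta> a * i) = \<psi> (k * \<theta> a)" using pmul[OF Ir[OF k] iI] one by simp
    moreover have "\<psi> (k * \<theta> a * i) = \<psi> k * \<phi> a"
      using pmul[OF k Il[OF iI]] by (simp add: mult.assoc \<phi>_def)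
    ultimately show ?thesis by simp
  qed
  have L': "\<psi> (\<theta> a * k) = \<phi> a * \<psi> k" if "k \<in> I" for a k using L[OF that] phic by simp
  have pmulA: "\<phi> (a*b) = \<phi> a * \<phi> b" for a b
    using L'[OF Il[OF iI], of a "\<theta> b"] by (simp add: \<phi>_def tmul mult.assoc)
  have paddA: "\<phi> (a+b) = \<phi> a + \<phi> b" for a b
    using padd[OF Il[OF iI] Il[OF iI]] by (simp add: \<phi>_def tadd distrib_right)
  have psmA: "\<phi> (scaleC c' a) = c' * \<phi> a" for c' a
    using psm[OF Il[OF iI]] by (simp add: \<phi>_def tsm scaleC_mult_left[symmetric])
  have p0: "\<psi> 0 = 0" by (rule char_zero[OF ch I0])
  have phi0: "\<phi> 0 = 0" using paddA[of 0 0] by simp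
  have pf: "pair_fun I (\<lambda>a. \<psi> (\<theta> a * i)) \<psi> = pair_fun I \<phi> \<psi>"
  proof -
    have "(\<lambda>a. \<psi> (\<theta> a * i)) = \<phi>" by (simp add: fun_eq_iff \<phi>_def)
    then show ?thesis by simp
  qed
  show ?thesis unfolding pf amal_char_space_def characters_def mem_Collect_eq is_character_def
  proof (intro conjI ballI allI impI)
    fix x y :: "'a \<times> 'b" assume x: "x \<in> amal_carrier I" and y: "y \<in> amal_carrier I"
    obtain a j where xa: "x = (a,j)" and j: "j \<in> I" using x by (auto simp: amal_carrier_def)
    obtain b k where yb: "y = (b,k)" and k: "k \<in> I" using y by (auto simp: amal_carrier_def)
    show "pair_fun I \<phi> \<psi> (amal_add x y) = pair_fun I \<phi> \<psi> x + pair_fun I \<phi> \<psi> y"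
      using j k by (simp add: xa yb amal_add_def pair_fun_def Iadd paddA padd)
    have m2: "\<theta> a * k + j * \<theta> b + j * k \<in> I"
      by (rule Iadd[OF Iadd[OF Il[OF k] Ir[OF j]] Ir[OF j]])
    have s1: "\<theta> a * k + j * \<theta> b \<in> I" by (rule Iadd[OF Il[OF k] Ir[OF j]])
    have e: "\<psi> (\<theta> a * k + j * \<theta> b + j * k) = \<phi> a * \<psi> k + \<psi> j * \<phi> b + \<psi> j * \<psi> k"
    proof -
      have "\<psi> (\<theta> a * k + j * \<theta> b + j * k) = \<psi> (\<theta> a * k + j * \<theta> b) + \<psi> (j * k)"
        by (rule padd[OF s1 Il[OF k]])
      also have "\<psi> (\<theta> a * k + j * \<theta> b) = \<psi> (\<theta> a * k) + \<psi> (j * \<theta> b)"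
        by (rule padd[OF Il[OF k] Ir[OF j]])
      finally show ?thesis by (simp only: L'[OF k] R[OF j] pmul[OF j k])
    qed
    have "pair_fun I \<phi> \<psi> (amal_mult \<theta> x y) = \<phi> a * \<phi> b + (\<phi> a * \<psi> k + \<psi> j * \<phi> b + \<psi> j * \<psi> k)"
      using m2 e by (simp add: xa yb amal_mult_def pair_fun_def pmulA)
    also have "\<dots> = pair_fun I \<phi> \<psi> x * pair_fun I \<phi> \<psi> y"
      using j k by (simp add: xa yb pair_fun_def ring_distribs)
    finally show "pair_fun I \<phi> \<psi> (amal_mult \<theta> x y) = pair_fun I \<phi> \<psi> x * pair_fun I \<phi> \<psi> y" .
  next
    fix c' and x :: "'a \<times> 'b" assume x: "x \<in> amal_carrier I"
    obtain a j where xa: "x = (a,j)" and j: "j \<in> I" using x by (auto simp: amal_carrier_def)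
    show "pair_fun I \<phi> \<psi> (amal_smul c' x) = c' * pair_fun I \<phi> \<psi> x"
      using j by (simp add: xa amal_smul_def pair_fun_def Ism psmA psm ring_distribs)
  next
    show "\<exists>x\<in>amal_carrier I. pair_fun I \<phi> \<psi> x \<noteq> 0"
      by (rule bexI[of _ "(0,i)"]) (use iI one phi0 in \<open>auto simp: amal_carrier_def pair_fun_def\<close>)
  next
    fix x :: "'a \<times> 'b" assume "x \<notin> amal_carrier I"
    then show "pair_fun I \<phi> \<psi> x = 0" by (cases x) (auto simp: amal_carrier_def pair_fun_def)
  qed
qed


lemma F_sub:
  fixes \<theta> :: "'a::cbanach_algebra \<Rightarrow> 'b::cbanach_algebra"
  assumes ideal: "closed_ideal I" and phi: "\<phi> \<in> char_space (UNIV :: 'a set)"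
  shows "pair_fun I \<phi> (\<lambda>_. 0) \<in> amal_char_space \<theta> I"
proof -
  have ch: "is_character UNIV (+) (*) scaleC \<phi>" using phi by (simp add: char_space_def characters_def)
  have padd: "\<And>x y. \<phi> (x+y) = \<phi> x + \<phi> y"
   and pmul: "\<And>x y. \<phi> (x*y) = \<phi> x * \<phi> y"
   and psm: "\<And>c x. \<phi> (scaleC c x) = c * \<phi> x"
   and nz: "\<exists>x. \<phi> x \<noteq> 0"
    using ch unfolding is_character_def by blast+
  have Iadd: "\<And>x y. x \<in> I \<Longrightarrow> y \<in> I \<Longrightarrow> x+y \<in> I"
   and Ism: "\<And>c x. x \<in> I \<Longrightarrow> scaleC c x \<in> I"
   and Il: "\<And>b x. x \<in> I \<Longrightarrow> b * x \<in> I"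
   and Ir: "\<And>b x. x \<in> I \<Longrightarrow> x * b \<in> I"
   and I0: "0 \<in> I"
    using ideal unfolding closed_ideal_def by blast+
  show ?thesis unfolding amal_char_space_def characters_def mem_Collect_eq is_character_def
  proof (intro conjI ballI allI impI)
    fix x y :: "'a \<times> 'b" assume x: "x \<in> amal_carrier I" and y: "y \<in> amal_carrier I"
    obtain a j where xa: "x = (a,j)" and j: "j \<in> I" using x by (auto simp: amal_carrier_def)
    obtain b k where yb: "y = (b,k)" and k: "k \<in> I" using y by (auto simp: amal_carrier_def)
    show "pair_fun I \<phi> (\<lambda>_. 0) (amal_add x y) = pair_fun I \<phi> (\<lambda>_. 0) x + pair_fun I \<phi> (\<lambda>_. 0) y"
      using j k Iadd[OF j k] by (simp add: xa yb amal_add_def pair_fun_def padd)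
    have m2: "\<theta> a * k + j * \<theta> b + j * k \<in> I"
      by (rule Iadd[OF Iadd[OF Il[OF k] Ir[OF j]] Ir[OF j]])
    show "pair_fun I \<phi> (\<lambda>_. 0) (amal_mult \<theta> x y) = pair_fun I \<phi> (\<lambda>_. 0) x * pair_fun I \<phi> (\<lambda>_. 0) y"
      using j k m2 by (simp add: xa yb amal_mult_def pair_fun_def pmul)
  next
    fix c' and x :: "'a \<times> 'b" assume x: "x \<in> amal_carrier I"
    obtain a j where xa: "x = (a,j)" and j: "j \<in> I" using x by (auto simp: amal_carrier_def)
    show "pair_fun I \<phi> (\<lambda>_. 0) (amal_smul c' x) = c' * pair_fun I \<phi> (\<lambda>_. 0) x"
      using j Ism[OF j] by (simp add: xa amal_smul_def pair_fun_def psm)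
  next
    obtain a where "\<phi> a \<noteq> 0" using nz by blast
    then show "\<exists>x\<in>amal_carrier I. pair_fun I \<phi> (\<lambda>_. 0) x \<noteq> 0"
      by (intro bexI[of _ "(a,0)"]) (use I0 in \<open>auto simp: amal_carrier_def pair_fun_def\<close>)
  next
    fix x :: "'a \<times> 'b" assume "x \<notin> amal_carrier I"
    then show "pair_fun I \<phi> (\<lambda>_. 0) x = 0" by (cases x) (auto simp: amal_carrier_def pair_fun_def)
  qed
qed

lemma decomp:
  fixes \<theta> :: "'a::cbanach_algebra \<Rightarrow> 'b::cbanach_algebra"
  assumes hom: "contractive_hom \<theta>" and ideal: "closed_ideal I"
    and f: "f \<in> amal_char_space \<theta> I"
  shows "(\<exists>\<psi> i. f = pair_fun I (\<lambda>a. \<psi> (\<theta> a * i)) \<psi> \<and> \<psi> \<in> char_space I \<and> i \<in> I \<and> \<psi> i = 1)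
       \<or> (\<exists>\<phi>. f = pair_fun I \<phi> (\<lambda>_. 0) \<and> \<phi> \<in> char_space (UNIV :: 'a set))"
proof -
  have ch: "is_character (amal_carrier I) amal_add (amal_mult \<theta>) amal_smul f"
    using f by (simp add: amal_char_space_def characters_def)
  have fadd: "\<And>x y. x \<in> amal_carrier I \<Longrightarrow> y \<in> amal_carrier I \<Longrightarrow> f (amal_add x y) = f x + f y"
   and fmul: "\<And>x y. x \<in> amal_carrier I \<Longrightarrow> y \<in> amal_carrier I \<Longrightarrow> f (amal_mult \<theta> x y) = f x * f y"
   and fsm: "\<And>c x. x \<in> amal_carrier I \<Longrightarrow> f (amal_smul c x) = c * f x"
   and fnz: "\<exists>x\<in>amal_carrier I. f x \<noteq> 0"
   and foff: "\<And>x. x \<notin> amal_carrier I \<Longrightarrow> f x = 0"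
    using ch unfolding is_character_def by meson+
  have Iadd: "\<And>x y. x \<in> I \<Longrightarrow> y \<in> I \<Longrightarrow> x+y \<in> I"
   and Ism: "\<And>c x. x \<in> I \<Longrightarrow> scaleC c x \<in> I"
   and Il: "\<And>b x. x \<in> I \<Longrightarrow> b * x \<in> I"
   and Ir: "\<And>b x. x \<in> I \<Longrightarrow> x * b \<in> I"
   and I0: "0 \<in> I"
    using ideal unfolding closed_ideal_def by blast+
  have t0: "\<theta> 0 = 0" by (rule hom_zero[OF hom])
  have car: "\<And>a j. (a,j) \<in> amal_carrier I \<longleftrightarrow> j \<in> I" by (simp add: amal_carrier_def)
  define \<phi> where "\<phi> a = f (a, 0)" for a
  define \<psi> where "\<psi> j = (if j \<in> I then f (0, j) else 0)" for j
  have split: "f = pair_fun I \<phi> \<psi>"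
  proof
    fix x :: "'a \<times> 'b"
    obtain a j where xa: "x = (a,j)" by (cases x)
    show "f x = pair_fun I \<phi> \<psi> x"
    proof (cases "j \<in> I")
      case True
      have "f (amal_add (a,0) (0,j)) = f (a,0) + f (0,j)" using True I0 by (intro fadd) (simp_all add: car)
      then show ?thesis using True by (simp add: xa amal_add_def pair_fun_def \<phi>_def \<psi>_def)
    next
      case False
      then show ?thesis using foff[of x] by (simp add: xa car pair_fun_def)
    qed
  qed
  show ?thesis
  proof (cases "\<forall>j\<in>I. f (0,j) = 0")
    case True
    have ps0: "\<psi> = (\<lambda>_. 0)" using True by (auto simp: \<psi>_def fun_eq_iff)
    have "\<phi> \<in> char_space (UNIV :: 'a set)"
      unfolding char_space_def characters_def mem_Collect_eq is_character_def
    proof (intro conjI ballI allI impI)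
      fix x y :: 'a
      show "\<phi> (x + y) = \<phi> x + \<phi> y"
        using fadd[of "(x,0)" "(y,0)"] I0 by (simp add: car amal_add_def \<phi>_def)
      show "\<phi> (x * y) = \<phi> x * \<phi> y"
        using fmul[of "(x,0)" "(y,0)"] I0 by (simp add: car amal_mult_def \<phi>_def)
    next
      fix c and x :: 'a
      show "\<phi> (scaleC c x) = c * \<phi> x"
        using fsm[of "(x,0)" c] I0 by (simp add: car amal_smul_def \<phi>_def)
    next
      obtain x where x: "x \<in> amal_carrier I" "f x \<noteq> 0" using fnz by blast
      obtain a j where xa: "x = (a,j)" by (cases x)
      have "j \<in> I" using x(1) unfolding xa car .
      moreover have "\<psi> j = 0" using True \<open>j \<in> I\<close> by (simp add: \<psi>_def)
      ultimately have "f x = \<phi> a" by (subst split) (simp add: xa pair_fun_def)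
      then show "\<exists>x\<in>UNIV. \<phi> x \<noteq> 0" using x by auto
    next
      fix x :: 'a assume "x \<notin> UNIV" then show "\<phi> x = 0" by simp
    qed
    moreover have "f = pair_fun I \<phi> (\<lambda>_. 0)" using split ps0 by simp
    ultimately show ?thesis by (intro disjI2 exI[of _ \<phi>] conjI)
  next
    case False
    then obtain k where k: "k \<in> I" "f (0,k) \<noteq> 0" by blast
    define i where "i = scaleC (1 / f (0,k)) k"
    have iI: "i \<in> I" using Ism k by (simp add: i_def)
    have "f (amal_smul (1 / f (0,k)) (0,k)) = (1 / f (0,k)) * f (0,k)"
      using k by (intro fsm) (simp add: car)
    then have one: "\<psi> i = 1" using k iI by (simp add: amal_smul_def \<psi>_def i_def)
    have psich: "\<psi> \<in> char_space I"
      unfolding char_space_def characters_def mem_Collect_eq is_character_def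
    proof (intro conjI ballI allI impI)
      fix x y :: 'b assume x: "x \<in> I" and y: "y \<in> I"
      show "\<psi> (x + y) = \<psi> x + \<psi> y"
        using fadd[of "(0,x)" "(0,y)"] x y Iadd[OF x y] by (simp add: car amal_add_def \<psi>_def)
      show "\<psi> (x * y) = \<psi> x * \<psi> y"
        using fmul[of "(0,x)" "(0,y)"] x y Il[OF y] by (simp add: car amal_mult_def \<psi>_def t0)
    next
      fix c and x :: 'b assume x: "x \<in> I"
      show "\<psi> (scaleC c x) = c * \<psi> x"
        using fsm[of "(0,x)" c] x Ism[OF x] by (simp add: car amal_smul_def \<psi>_def)
    next
      show "\<exists>x\<in>I. \<psi> x \<noteq> 0" using iI one by (intro bexI[of _ i]) auto
    next
      fix x :: 'b assume "x \<notin> I" then show "\<psi> x = 0" by (simp add: \<psi>_def)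
    qed
    have phiE: "\<phi> = (\<lambda>a. \<psi> (\<theta> a * i))"
    proof
      fix a
      have "f (amal_mult \<theta> (a,0) (0,i)) = f (a,0) * f (0,i)"
        using iI I0 by (intro fmul) (simp_all add: car)
      moreover have "amal_mult \<theta> (a,0) (0,i) = (0, \<theta> a * i)"
        by (simp add: amal_mult_def t0)
      moreover have "f (0,i) = 1" using one iI by (simp add: \<psi>_def)
      ultimately show "\<phi> a = \<psi> (\<theta> a * i)" using Il[OF iI] by (simp add: \<phi>_def \<psi>_def)
    qed
    have "f = pair_fun I (\<lambda>a. \<psi> (\<theta> a * i)) \<psi>" using split phiE by simp
    then show ?thesis using psich iI one by (intro disjI1 exI[of _ \<psi>] exI[of _ i] conjI)
  qed
qed


theorem theorem5p1:
  fixes \<theta> :: "'a::cbanach_algebra \<Rightarrow> 'b::cbanach_algebra"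
    and I :: "'b set"
  assumes hom: "contractive_hom \<theta>"
    and ideal: "closed_ideal I"
    and sigmaA: "char_space (UNIV :: 'a set) \<noteq> {}"
    and dense: "I \<subseteq> closure (cspan ({\<theta> a * i | a i. i \<in> I} \<union> {i * \<theta> a | a i. i \<in> I}))"
  defines "E \<equiv> {pair_fun I (\<lambda>a. \<psi> (\<theta> a * i)) \<psi> | \<psi> i.
                   \<psi> \<in> char_space I \<and> i \<in> I \<and> \<psi> i = 1}"
    and "F \<equiv> {pair_fun I \<phi> (\<lambda>_. 0) | \<phi>. \<phi> \<in> char_space (UNIV :: 'a set)}"
  shows "amal_char_space \<theta> I = E \<union> F
         \<and> openin (top_of_set (amal_char_space \<theta> I)) E
         \<and> closedin (top_of_set (amal_char_space \<theta> I)) F"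
proof -
  let ?S = "amal_char_space \<theta> I"
  have I0: "0 \<in> I" using ideal by (simp add: closed_ideal_def)
  have t0: "\<theta> 0 = 0" by (rule hom_zero[OF hom])
  have SEF: "?S = E \<union> F"
  proof
    show "?S \<subseteq> E \<union> F"
    proof
      fix f assume "f \<in> ?S"
      from decomp[OF hom ideal this] show "f \<in> E \<union> F" unfolding E_def F_def by blast
    qed
    show "E \<union> F \<subseteq> ?S"
      using E_sub[OF hom ideal] F_sub[OF ideal, of _ \<theta>] unfolding E_def F_def by blast
  qed
  define C where "C = (\<Inter>j\<in>I. {g :: 'a \<times> 'b \<Rightarrow> complex. g (0, j) = 0})"
  have Cc: "closed C" unfolding C_def
    by (intro closed_INT ballI closed_Collect_eq continuous_on_product_coordinates continuous_on_const)
  have FC: "F \<subseteq> C"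
  proof
    fix g assume "g \<in> F"
    then obtain \<phi> where g: "g = pair_fun I \<phi> (\<lambda>_. 0)" and phi: "\<phi> \<in> char_space (UNIV :: 'a set)"
      unfolding F_def by blast
    have "is_character UNIV (+) (*) scaleC \<phi>" using phi by (simp add: char_space_def characters_def)
    then have "\<phi> 0 = 0" by (rule char_zero) simp
    then show "g \<in> C" by (simp add: C_def g pair_fun_def)
  qed
  have EC: "E \<inter> C = {}"
  proof (rule ccontr)
    assume "E \<inter> C \<noteq> {}"
    then obtain g where gE: "g \<in> E" and gC: "g \<in> C" by blast
    then obtain \<psi> i where g: "g = pair_fun I (\<lambda>a. \<psi> (\<theta> a * i)) \<psi>"
      and psi: "\<psi> \<in> char_space I" and iI: "i \<in> I" and one: "\<psi> i = 1"
      unfolding E_def by blast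
    have "is_character I (+) (*) scaleC \<psi>" using psi by (simp add: char_space_def characters_def)
    then have p0: "\<psi> 0 = 0" using I0 by (rule char_zero)
    have "g (0, i) = 0" using gC iI by (simp add: C_def)
    moreover have "g (0, i) = 1" using iI one p0 t0 by (simp add: g pair_fun_def)
    ultimately show False by simp
  qed
  have Feq: "F = ?S \<inter> C" using SEF FC EC by blast
  have Eeq: "E = ?S \<inter> (- C)" using SEF FC EC by blast
  show ?thesis
  proof (intro conjI)
    show "?S = E \<union> F" by (rule SEF)
    show "openin (top_of_set ?S) E" unfolding Eeq using Cc by (intro openin_open_Int open_Compl)
    show "closedin (top_of_set ?S) F" unfolding Feq using Cc by (rule closedin_closed_Int)
  qed
qed

end
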